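(* Let $\alpha\in C^\infty(\mathbb{R})$ satisfy $-1<\alpha<1$ and $\alpha(0)=0$, and set $\alpha^{(-1)}(t)=\int_0^t\alpha(s)\,ds$. Let $$p(x,\xi)=\sqrt{|\xi|^2+2\alpha(x_2)\xi_1\xi_3},\qquad x,\xi\in\mathbb{R}^3,$$ be the symbol of the cometric $\sum_{j,k} g^{jk}(x)d\xi_jd\xi_k=d\xi^2+2\alpha(x_2)\,d\xi_1d\xi_3$ on $T^*\mathbb{R}^3$, and let $\sum_{j,k} g_{jk}(x)dx_jdx_k$ be the corresponding Riemannian metric on $\mathbb{R}^3$, where $(g_{jk})=(g^{jk})^{-1}$. Then for each fixed $x_1\in\mathbb{R}$ and $-\pi/2<\theta<\pi/2$, the curve $$t\mapsto x(x_1,\theta;t)=\bigl(x_1+t\sin\theta,\ t\cos\theta,\ \sin\theta\,\alpha^{(-1)}(t\cos\theta)/\cos\theta\bigr)$$ is a geodesic for the metric $\sum g_{jk}dx_jdx_k$. Furthermore, the absolute value of the Jacobian determinant of the map $(x_1,\theta,t)\mapsto x(x_1,\theta;t)$ equals $|\alpha^{(-1)}(t)|$ when $\theta=0$. *)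

theory Defs
  imports "HOL-Analysis.Analysis"
begin

definition smooth_real :: "(real \<Rightarrow> real) \<Rightarrow> bool" where
  "smooth_real f \<longleftrightarrow> (\<exists>D :: nat \<Rightarrow> real \<Rightarrow> real. D 0 = f \<and>
      (\<forall>n x. (D n has_real_derivative D (Suc n) x) (at x)))"

definition antideriv :: "(real \<Rightarrow> real) \<Rightarrow> real \<Rightarrow> real" where
  "antideriv a t = (if 0 \<le> t then integral {0..t} a else - integral {t..0} a)"

definition cometric :: "(real \<Rightarrow> real) \<Rightarrow> real^3 \<Rightarrow> real^3^3" where
  "cometric a x = (\<chi> j k. (if j = k then 1 else 0)
      + (if (j = 1 \<and> k = 3) \<or> (j = 3 \<and> k = 1) then a (x$2) else 0))"

definition metric :: "(real \<Rightarrow> real) \<Rightarrow> real^3 \<Rightarrow> real^3^3" where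
  "metric a x = matrix_inv (cometric a x)"

definition pderiv3 :: "(real^3 \<Rightarrow> real) \<Rightarrow> 3 \<Rightarrow> real^3 \<Rightarrow> real" where
  "pderiv3 F l x = deriv (\<lambda>s. F (x + s *\<^sub>R axis l 1)) 0"

definition christoffel :: "(real^3 \<Rightarrow> real^3^3) \<Rightarrow> real^3 \<Rightarrow> 3 \<Rightarrow> 3 \<Rightarrow> 3 \<Rightarrow> real" where
  "christoffel G x k i j = (1/2) * (\<Sum>l\<in>UNIV. matrix_inv (G x) $ k $ l *
      (pderiv3 (\<lambda>y. G y $ j $ l) i x + pderiv3 (\<lambda>y. G y $ i $ l) j x
       - pderiv3 (\<lambda>y. G y $ i $ j) l x))"

definition is_geodesic :: "(real^3 \<Rightarrow> real^3^3) \<Rightarrow> (real \<Rightarrow> real^3) \<Rightarrow> bool" where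
  "is_geodesic G \<gamma> \<longleftrightarrow> (\<exists>\<gamma>' \<gamma>''. \<forall>t.
      (\<gamma> has_vector_derivative \<gamma>' t) (at t) \<and>
      (\<gamma>' has_vector_derivative \<gamma>'' t) (at t) \<and>
      (\<forall>k. \<gamma>'' t $ k + (\<Sum>i\<in>UNIV. \<Sum>j\<in>UNIV. christoffel G (\<gamma> t) k i j * \<gamma>' t $ i * \<gamma>' t $ j) = 0))"

definition curve :: "(real \<Rightarrow> real) \<Rightarrow> real \<Rightarrow> real \<Rightarrow> real \<Rightarrow> real^3" where
  "curve a x1 \<theta> t = vector [x1 + t * sin \<theta>, t * cos \<theta>,
      sin \<theta> * antideriv a (t * cos \<theta>) / cos \<theta>]"

definition param_map :: "(real \<Rightarrow> real) \<Rightarrow> real^3 \<Rightarrow> real^3" where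
  "param_map a u = curve a (u$1) (u$2) (u$3)"

end

theory Submission imports Defs begin

lemma vec3_decomp: "(vector [a, b, c] :: real^3) = a *\<^sub>R axis 1 1 + b *\<^sub>R axis 2 1 + c *\<^sub>R axis 3 1"
  by (simp add: vec_eq_iff forall_3 axis_def)

lemma vec3_vderiv:
  assumes "(fa has_real_derivative d1) (at t)" "(fb has_real_derivative d2) (at t)"
    "(fc has_real_derivative d3) (at t)"
  shows "((\<lambda>t. vector [fa t, fb t, fc t] :: real^3) has_vector_derivative vector [d1, d2, d3]) (at t)"
  unfolding vec3_decomp
  by (auto intro!: derivative_eq_intros assms)

lemma vec3_deriv:
  assumes "(f1 has_derivative d1) F" "(f2 has_derivative d2) F" "(f3 has_derivative d3) F"
  shows "((\<lambda>u. vector [f1 u, f2 u, f3 u] :: real^3) has_derivative (\<lambda>h. vector [d1 h, d2 h, d3 h])) F"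
  unfolding vec3_decomp
  by (auto intro!: derivative_eq_intros assms)

lemma antideriv_deriv:
  assumes "continuous_on UNIV a"
  shows "(antideriv a has_real_derivative a x) (at x)"
proof -
  define c where "c = min x 0 - 1"
  define b where "b = max x 0 + 1"
  have int: "a integrable_on {c..b}"
    using assms integrable_continuous_real continuous_on_subset by blast
  have eq: "antideriv a t = integral {c..t} a - integral {c..0} a" if "t \<in> {c<..<b}" for t
  proof (cases "0 \<le> t")
    case True
    have "integral {c..0} a + integral {0..t} a = integral {c..t} a"
      by (rule Henstock_Kurzweil_Integration.integral_combine) (use True that in \<open>auto simp: c_def b_def intro!: integrable_on_subinterval[OF int]\<close>)
    then show ?thesis using True by (simp add: antideriv_def)
  next
    case False
    have "integral {c..t} a + integral {t..0} a = integral {c..0} a"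
      by (rule Henstock_Kurzweil_Integration.integral_combine) (use False that in \<open>auto simp: c_def b_def intro!: integrable_on_subinterval[OF int]\<close>)
    then show ?thesis using False by (simp add: antideriv_def)
  qed
  have "((\<lambda>t. integral {c..t} a) has_real_derivative a x) (at x within {c..b})"
    by (rule integral_has_real_derivative) (auto intro: continuous_on_subset[OF assms] simp: c_def b_def)
  then have "((\<lambda>t. integral {c..t} a) has_real_derivative a x) (at x)"
    by (subst (asm) at_within_interior) (auto simp: c_def b_def)
  then have "((\<lambda>t. integral {c..t} a - integral {c..0} a) has_real_derivative a x) (at x)"
    by (auto intro!: derivative_eq_intros)
  then show ?thesis
    by (rule has_field_derivative_transform_within_open[where S="{c<..<b}"]) (use eq in \<open>auto simp: c_def b_def\<close>)
qed

definition gm :: "real \<Rightarrow> real^3^3" where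
  "gm a = (\<chi> j k. if j = k then (if j = 2 then 1 else 1/(1-a\<^sup>2))
     else if (j = 1 \<and> k = 3) \<or> (j = 3 \<and> k = 1) then -a/(1-a\<^sup>2) else 0)"

lemma d_ne: fixes b :: real assumes "\<bar>b\<bar> < 1" shows "1 - b\<^sup>2 \<noteq> 0"
  using assms abs_square_less_1[of b] by simp

lemma inv_unique: fixes A B :: "real^3^3"
  assumes "A ** B = mat 1" "B ** A = mat 1" shows "matrix_inv A = B"
proof -
  have "\<exists>A'. A ** A' = mat 1 \<and> A' ** A = mat 1" using assms by blast
  then have h: "A ** matrix_inv A = mat 1 \<and> matrix_inv A ** A = mat 1"
    unfolding matrix_inv_def by (rule someI_ex)
  have "matrix_inv A = matrix_inv A ** (A ** B)" using assms by simp
  also have "\<dots> = B" using h by (simp add: matrix_mul_assoc)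
  finally show ?thesis .
qed


definition cm :: "real \<Rightarrow> real^3^3" where
  "cm b = (\<chi> j k. (if j = k then 1 else 0)
      + (if (j = 1 \<and> k = 3) \<or> (j = 3 \<and> k = 1) then b else 0))"

lemma cm_gm: assumes d: "1 - b\<^sup>2 \<noteq> 0"
  shows "cm b ** gm b = mat 1"
proof -
  have e: "1 / (1 - b\<^sup>2) - b * b / (1 - b\<^sup>2) = 1"
    using d by (simp add: field_simps power2_eq_square)
  show ?thesis
    by (simp add: cm_def gm_def matrix_matrix_mult_def vec_eq_iff forall_3 sum_3 mat_def e)
qed


lemma gm_cm: assumes d: "1 - b\<^sup>2 \<noteq> 0"
  shows "gm b ** cm b = mat 1"
proof -
  have e: "1 / (1 - b\<^sup>2) - b * b / (1 - b\<^sup>2) = 1"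
    using d by (simp add: field_simps power2_eq_square)
  show ?thesis
    by (simp add: cm_def gm_def matrix_matrix_mult_def vec_eq_iff forall_3 sum_3 mat_def e)
qed

lemma cometric_cm: "cometric a x = cm (a (x$2))"
  by (simp add: cometric_def cm_def)

lemma gm_props: fixes x :: "real^3"
  assumes "\<bar>a (x$2)\<bar> < 1"
  shows "metric a x = gm (a (x$2))" "matrix_inv (metric a x) = cometric a x"
proof -
  have d: "1 - (a (x$2))\<^sup>2 \<noteq> 0" using assms by (rule d_ne)
  have 1: "cometric a x ** gm (a (x$2)) = mat 1"
    unfolding cometric_cm by (rule cm_gm[OF d])
  have 2: "gm (a (x$2)) ** cometric a x = mat 1"
    unfolding cometric_cm by (rule gm_cm[OF d])
  show "metric a x = gm (a (x$2))" unfolding metric_def by (rule inv_unique[OF 1 2])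
  then show "matrix_inv (metric a x) = cometric a x" using inv_unique[OF 2 1] by simp
qed

definition de :: "real \<Rightarrow> 3 \<Rightarrow> 3 \<Rightarrow> real" where
  "de a j k = (if j = k then (if j = 2 then 0 else 2*a/(1-a\<^sup>2)\<^sup>2)
     else if (j = 1 \<and> k = 3) \<or> (j = 3 \<and> k = 1) then -(1+a\<^sup>2)/(1-a\<^sup>2)\<^sup>2 else 0)"

lemma contraction:
  assumes d: "1 - b\<^sup>2 \<noteq> 0"
  shows "vector [0, 0, s * (b1 * c)] $ k + (\<Sum>i\<in>UNIV. \<Sum>j\<in>UNIV.
     (1/2 * (\<Sum>l\<in>UNIV. cm b $ k $ l * ((if i = 2 then de b j l * b1 else 0) + (if j = 2 then de b i l * b1 else 0) - (if l = 2 then de b i j * b1 else 0))))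
      * (vector [s, c, s * b] :: real^3) $ i * (vector [s, c, s * b] :: real^3) $ j) = (0::real)"
proof -
  define q where "q = 1 / (1 - b\<^sup>2)\<^sup>2"
  have q: "q * (1 - b\<^sup>2)\<^sup>2 = 1" using d by (simp add: q_def)
  have de: "de b j l = (if j = l then (if j = 2 then 0 else 2*b*q)
     else if (j = 1 \<and> l = 3) \<or> (j = 3 \<and> l = 1) then -(1+b\<^sup>2)*q else 0)" for j l
    by (simp add: de_def q_def)
  show ?thesis
    using exhaust_3[of k]
    apply (elim disjE)
    apply (simp_all add: sum_3 cm_def de)
      apply (simp add: algebra_simps power2_eq_square)
     apply (simp add: algebra_simps power2_eq_square)
    apply (rule trans[of _ "s*b1*c*(1 - q*(1-b\<^sup>2)\<^sup>2)"])
     apply (simp add: algebra_simps power2_eq_square)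
    apply (simp add: q)
    done
qed
lemma gm_entry_deriv:
  assumes "\<bar>a\<bar> < 1"
  shows "((\<lambda>b. gm b $ j $ k) has_real_derivative de a j k) (at a)"
proof -
  have d: "1 - a\<^sup>2 \<noteq> 0" using assms by (rule d_ne)
  have e: "(\<lambda>b. gm b $ j $ k) = (if j = k then (if j = 2 then (\<lambda>b. 1) else (\<lambda>b. 1/(1-b\<^sup>2)))
     else if (j = 1 \<and> k = 3) \<or> (j = 3 \<and> k = 1) then (\<lambda>b. -b/(1-b\<^sup>2)) else (\<lambda>b. 0))"
    by (auto simp: gm_def fun_eq_iff)
  have a2: "a\<^sup>2 \<noteq> 1" using d by simp
  have D1: "((\<lambda>b. -b/(1-b\<^sup>2)) has_real_derivative -(1+a\<^sup>2)/(1-a\<^sup>2)\<^sup>2) (at a)"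
  proof -
    have "-((1 - a\<^sup>2 + a * (2 * a)) / ((1 - a\<^sup>2) * (1 - a\<^sup>2))) = -(1+a\<^sup>2)/(1-a\<^sup>2)\<^sup>2"
      by (simp add: power2_eq_square minus_divide_left[symmetric] diff_divide_distrib add_divide_distrib)
    then show ?thesis using a2 by (auto intro!: derivative_eq_intros)
  qed
  have D2: "((\<lambda>b. 1/(1-b\<^sup>2)) has_real_derivative 2*a/(1-a\<^sup>2)\<^sup>2) (at a)"
    using a2 by (auto intro!: derivative_eq_intros simp: power2_eq_square)
  show ?thesis unfolding e de_def
    using D1 D2 by simp
qed

lemma pderiv_metric:
  assumes b: "\<And>s. \<bar>a s\<bar> < 1" and der: "\<And>s. (a has_real_derivative a1 s) (at s)"
  shows "pderiv3 (\<lambda>y. metric a y $ j $ l) i x = (if i = 2 then de (a (x$2)) j l * a1 (x$2) else 0)"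
proof -
  have e: "(\<lambda>s. metric a (x + s *\<^sub>R axis i 1) $ j $ l) = (\<lambda>s. gm (a (x$2 + (if i = 2 then s else 0))) $ j $ l)"
    by (auto simp: gm_props[OF b] fun_eq_iff axis_def)
  show ?thesis
  proof (cases "i = 2")
    case True
    have "((\<lambda>s. gm (a (x$2 + s)) $ j $ l) has_real_derivative de (a (x$2)) j l * (a1 (x$2) * 1)) (at 0)"
      apply (rule DERIV_chain2[where f="\<lambda>b. gm b $ j $ l"])
      using gm_entry_deriv[OF b] apply simp
      apply (rule DERIV_chain2[where f=a, OF _ ])
      using der apply simp
      by (auto intro!: derivative_eq_intros)
    then show ?thesis unfolding pderiv3_def e using True by (simp add: DERIV_imp_deriv)
  next
    case False
    then show ?thesis unfolding pderiv3_def e by simp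
  qed
qed

lemma hd_nth: "((\<lambda>u. u $ i) has_derivative (\<lambda>h. h $ i)) F"
  by (rule bounded_linear_imp_has_derivative) (rule bounded_linear_vec_nth)


lemma chain_gen:
  assumes "\<And>y. (f has_real_derivative f' y) (at y)" "(g has_real_derivative g') (at x)"
  shows "((\<lambda>x. f (g x)) has_real_derivative f' (g x) * g') (at x)"
  using DERIV_chain2[OF assms(1) assms(2)] .

lemma geodesic_part:
  assumes b: "\<And>s. \<bar>a s\<bar> < 1" and der: "\<And>s. (a has_real_derivative a1 s) (at s)"
    and cont: "continuous_on UNIV a"
    and c: "cos \<theta> > 0"
  shows "is_geodesic (metric a) (curve a x1 \<theta>)"
  unfolding is_geodesic_def
proof (intro exI allI conjI)
  fix t
  let ?s = "sin \<theta>" and ?c = "cos \<theta>"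
  show "(curve a x1 \<theta> has_vector_derivative vector [?s, ?c, ?s * a (t * ?c)]) (at t)"
    unfolding curve_def
    apply (rule vec3_vderiv)
      apply (auto intro!: derivative_eq_intros)[2]
    apply (rule DERIV_cong)
     apply (rule DERIV_cdivide)
     apply (rule DERIV_cmult)
     apply (rule chain_gen[OF antideriv_deriv[OF cont]])
     apply (auto intro!: derivative_eq_intros)
    using c by simp
  show "((\<lambda>t. vector [?s, ?c, ?s * a (t * ?c)] :: real^3) has_vector_derivative vector [0, 0, ?s * (a1 (t * ?c) * ?c)]) (at t)"
    apply (rule vec3_vderiv)
      apply (auto intro!: derivative_eq_intros)[2]
    apply (rule DERIV_cmult)
    apply (rule chain_gen[OF der])
    by (auto intro!: derivative_eq_intros)
  fix k
  have x2: "curve a x1 \<theta> t $ 2 = t * ?c" by (simp add: curve_def)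
  have d: "1 - (a (t * ?c))\<^sup>2 \<noteq> 0" using b[of "t * ?c"] by (rule d_ne)
  show "vector [0, 0, ?s * (a1 (t * ?c) * ?c)] $ k +
         (\<Sum>i\<in>UNIV. \<Sum>j\<in>UNIV. christoffel (metric a) (curve a x1 \<theta> t) k i j *
            vector [?s, ?c, ?s * a (t * ?c)] $ i * vector [?s, ?c, ?s * a (t * ?c)] $ j) = 0"
    unfolding christoffel_def gm_props(2)[OF b] cometric_cm pderiv_metric[OF b der] x2
    by (rule contraction[OF d])
qed


lemma param_eq: "param_map a = (\<lambda>u. vector [u$1 + u$3 * sin (u$2), u$3 * cos (u$2),
      sin (u$2) * antideriv a (u$3 * cos (u$2)) / cos (u$2)])"
  by (simp add: fun_eq_iff param_map_def curve_def)

lemma chain_fd: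
  assumes "\<And>y. (f has_real_derivative f' y) (at y)" "(g has_derivative g') (at x)"
  shows "((\<lambda>x. f (g x)) has_derivative (\<lambda>h. g' h * f' (g x))) (at x)"
  using DERIV_compose_FDERIV[OF assms(1) assms(2)[unfolded at_within_def[symmetric]]] by simp

lemma jac_part:
  assumes cont: "continuous_on UNIV a"
  shows "(param_map a has_derivative (\<lambda>h::real^3. vector [h$1 + t * h$2, h$3, antideriv a t * h$2] :: real^3)) (at (vector [x1, 0, t]))"
  unfolding param_eq
  apply (rule vec3_deriv)
    apply (rule has_derivative_eq_rhs)
     apply (auto intro!: derivative_eq_intros hd_nth chain_fd[where f=sin, OF DERIV_sin] chain_fd[where f=cos, OF DERIV_cos] chain_fd[where f="antideriv a", OF antideriv_deriv[OF cont]] simp: fun_eq_iff)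
  done

lemma jac_det:
  assumes cont: "continuous_on UNIV a"
  shows "param_map a differentiable (at (vector [x1, 0, t]))
        \<and> \<bar>det (matrix (frechet_derivative (param_map a) (at (vector [x1, 0, t]))))\<bar>
            = \<bar>antideriv a t\<bar>"
proof
  note d = jac_part[OF cont, of t x1]
  then show "param_map a differentiable (at (vector [x1, 0, t]))"
    unfolding differentiable_def by blast
  have "frechet_derivative (param_map a) (at (vector [x1, 0, t])) = (\<lambda>h::real^3. vector [h$1 + t * h$2, h$3, antideriv a t * h$2] :: real^3)"
    using frechet_derivative_at[OF d] by simp
  then show "\<bar>det (matrix (frechet_derivative (param_map a) (at (vector [x1, 0, t]))))\<bar> = \<bar>antideriv a t\<bar>"
    by (simp add: det_3 matrix_def axis_def)
qed

theorem lemma2p1: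
  fixes \<alpha> :: "real \<Rightarrow> real"
  assumes "smooth_real \<alpha>"
    and "\<And>s. -1 < \<alpha> s \<and> \<alpha> s < 1"
    and "\<alpha> 0 = 0"
  shows "(\<forall>x1 \<theta>. -(pi/2) < \<theta> \<and> \<theta> < pi/2 \<longrightarrow> is_geodesic (metric \<alpha>) (curve \<alpha> x1 \<theta>))
    \<and> (\<forall>x1 t. param_map \<alpha> differentiable (at (vector [x1, 0, t]))
        \<and> \<bar>det (matrix (frechet_derivative (param_map \<alpha>) (at (vector [x1, 0, t]))))\<bar>
            = \<bar>antideriv \<alpha> t\<bar>)"
proof -
  obtain D :: "nat \<Rightarrow> real \<Rightarrow> real" where D0: "D 0 = \<alpha>"
    and DS: "\<And>n x. (D n has_real_derivative D (Suc n) x) (at x)"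
    using assms(1) unfolding smooth_real_def by blast
  have der: "\<And>s. (\<alpha> has_real_derivative D 1 s) (at s)" using DS[of 0] D0 by simp
  have cont: "continuous_on UNIV \<alpha>"
    using der by (meson DERIV_isCont continuous_at_imp_continuous_on)
  have b: "\<And>s. \<bar>\<alpha> s\<bar> < 1" using assms(2) by (simp add: abs_less_iff)
  show ?thesis
    using geodesic_part[OF b der cont] jac_det[OF cont] cos_gt_zero_pi by blast
qed

end
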